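(* Let $A=[a_{ij}]$ be a real $n\times n$ matrix with zero diagonal and $f(\sigma)=\sum_{p=1}^{n-1}\sum_{q=p+1}^n a_{\sigma(p)\sigma(q)}$ its LOP objective function on $\Sigma_n$. Let $k\ge0$, $l\ge1$ with $k+l\le n$, let $i_1,\dots,i_k,j_1,\dots,j_l\in\{1,\dots,n\}$ be pairwise distinct, and let $S_1=\{\sigma:\sigma(1)=i_1,\dots,\sigma(k)=i_k\}$, $S_2=\{\sigma:\sigma(n)=j_1,\sigma(n-1)=j_2,\dots,\sigma(n-l+1)=j_l\}$. Writing $I=\{i_1,\dots,i_k\}$, $J=\{j_1,\dots,j_l\}$ and $[n]=\{1,\dots,n\}$, $$\frac{1}{|S_1\cap S_2|}\sum_{\sigma\in S_1\cap S_2}f(\sigma)=\sum_{r=1}^{k}\ \sum_{j\in[n]\setminus\{i_1,\dots,i_r\}}a_{i_rj}+\sum_{s=1}^{l}\ \sum_{i\in[n]\setminus(I\cup\{j_1,\dots,j_{s-1}\})}a_{ij_s}+\frac12\sum_{i,j\in[n]\setminus(I\cup J)}a_{ij}.$$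
   Context: $\Sigma_n$ is the symmetric group on $\{1,\dots,n\}$; $\sigma(p)$ is the row/column index placed in position $p$. *)

theory Defs
  imports Complex_Main "HOL-Combinatorics.Permutations"
begin

definition lop_obj :: "nat \<Rightarrow> (nat \<Rightarrow> nat \<Rightarrow> real) \<Rightarrow> (nat \<Rightarrow> nat) \<Rightarrow> real" where
  "lop_obj n a \<sigma> = (\<Sum>p = 1..n-1. \<Sum>q = p+1..n. a (\<sigma> p) (\<sigma> q))"

end

theory Submission
  imports Defs
begin

theorem proposition7:
  fixes n k l :: nat and a :: "nat \<Rightarrow> nat \<Rightarrow> real" and ii jj :: "nat \<Rightarrow> nat"
  assumes diag: "\<forall>i\<in>{1..n}. a i i = 0"
    and l: "l \<ge> 1" and kl: "k + l \<le> n"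
    and ii_range: "ii ` {1..k} \<subseteq> {1..n}" and jj_range: "jj ` {1..l} \<subseteq> {1..n}"
    and ii_inj: "inj_on ii {1..k}" and jj_inj: "inj_on jj {1..l}"
    and disj: "ii ` {1..k} \<inter> jj ` {1..l} = {}"
  defines "S \<equiv> {\<sigma>. \<sigma> permutes {1..n} \<and> (\<forall>r\<in>{1..k}. \<sigma> r = ii r)
                     \<and> (\<forall>s\<in>{1..l}. \<sigma> (n + 1 - s) = jj s)}"
    and "I \<equiv> ii ` {1..k}" and "J \<equiv> jj ` {1..l}"
  shows "(\<Sum>\<sigma>\<in>S. lop_obj n a \<sigma>) / real (card S)
       = (\<Sum>r = 1..k. \<Sum>j \<in> {1..n} - ii ` {1..r}. a (ii r) j)
       + (\<Sum>s = 1..l. \<Sum>i \<in> {1..n} - (I \<union> jj ` {1..<s}). a i (jj s))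
       + (1/2) * (\<Sum>i \<in> {1..n} - (I \<union> J). \<Sum>j \<in> {1..n} - (I \<union> J). a i j)"
proof -
  define P where "P = {k+1..n-l}"
  define Q where "Q = {n+1-l..n}"
  define M where "M = {1..n} - (I \<union> J)"
  define C1 where "C1 = (\<Sum>r = 1..k. \<Sum>j \<in> {1..n} - ii ` {1..r}. a (ii r) j)"
  define C2 where "C2 = (\<Sum>s = 1..l. \<Sum>i \<in> {1..n} - (I \<union> jj ` {1..<s}). a i (jj s))"
  define D where "D = (\<Sum>i \<in> M. \<Sum>j \<in> M. a i j)"
  define hm where "hm = (\<lambda>\<sigma>::nat\<Rightarrow>nat. \<Sum>p\<in>P. \<Sum>q=p+1..n-l. a (\<sigma> p) (\<sigma> q))"
  define \<rho> where "\<rho> = (\<lambda>p::nat. if p \<in> P then k + 1 + (n - l) - p else p)"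
  have finS: "finite S"
    by (rule finite_subset[OF _ finite_permutations[of "{1..n}"]]) (auto simp: S_def)
  have S_perm: "\<sigma> permutes {1..n}" if "\<sigma> \<in> S" for \<sigma> using that by (simp add: S_def)
  have S_ii: "\<sigma> r = ii r" if "\<sigma> \<in> S" "r \<in> {1..k}" for \<sigma> r using that by (simp add: S_def)
  have S_jj: "\<sigma> (n + 1 - s) = jj s" if "\<sigma> \<in> S" "s \<in> {1..l}" for \<sigma> s using that by (simp add: S_def)
  have cardI: "card I = k" using ii_inj by (simp add: I_def card_image)
  have cardJ: "card J = l" using jj_inj by (simp add: J_def card_image)
  have cardM: "card M = n - k - l"
  proof -
    have "card (I \<union> J) = k + l" using cardI cardJ disj
      by (simp add: I_def J_def card_Un_disjoint)
    moreover have "I \<union> J \<subseteq> {1..n}" using ii_range jj_range I_def J_def by auto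
    moreover have "finite (I \<union> J)" using \<open>I \<union> J \<subseteq> {1..n}\<close> finite_subset by blast
    ultimately show ?thesis unfolding M_def by (simp add: card_Diff_subset)
  qed
  have cardP: "card P = n - k - l" unfolding P_def by simp
  have Q_bij: "bij_betw (\<lambda>x. n + 1 - x) Q {1..l}"
    by (rule bij_betw_byWitness[where f'="\<lambda>x. n + 1 - x"]) (use kl in \<open>auto simp: Q_def\<close>)
  have Qimg: "{n+1-s..n} = (\<lambda>t. n + 1 - t) ` {1..s}" if "s \<le> n" for s
  proof
    show "(\<lambda>t. n + 1 - t) ` {1..s} \<subseteq> {n+1-s..n}" using that by auto
    show "{n+1-s..n} \<subseteq> (\<lambda>t. n + 1 - t) ` {1..s}"
    proof
      fix x assume x: "x \<in> {n+1-s..n}"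
      then have "x = n + 1 - (n + 1 - x)" "n + 1 - x \<in> {1..s}" using that by auto
      then show "x \<in> (\<lambda>t. n + 1 - t) ` {1..s}" by (rule image_eqI)
    qed
  qed
  have P_eq: "P = {1..n} - ({1..k} \<union> Q)" using kl l by (auto simp: P_def Q_def)
  have IJsub: "I \<subseteq> {1..n}" "J \<subseteq> {1..n}" using ii_range jj_range I_def J_def by auto
  have IJdisj: "I \<inter> J = {}" using disj I_def J_def by simp
  have nonempty: "S \<noteq> {}"
  proof -
    obtain h where h: "bij_betw h P M"
      using finite_same_card_bij[of P M] cardP cardM by (auto simp: P_def M_def)
    define \<sigma>0 where "\<sigma>0 = (\<lambda>x. if x \<in> {1..k} then ii x else if x \<in> P then h x
        else if x \<in> Q then jj (n + 1 - x) else x)"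
    have b1: "bij_betw \<sigma>0 {1..k} I"
      using inj_on_imp_bij_betw[OF ii_inj] unfolding I_def
      by (rule bij_betw_cong[THEN iffD1, rotated]) (auto simp: \<sigma>0_def)
    have b2: "bij_betw \<sigma>0 P M"
      using h by (rule bij_betw_cong[THEN iffD1, rotated]) (auto simp: \<sigma>0_def P_def)
    have b3: "bij_betw \<sigma>0 Q J"
      using bij_betw_trans[OF Q_bij inj_on_imp_bij_betw[OF jj_inj]] unfolding J_def
      by (rule bij_betw_cong[THEN iffD1, rotated]) (use kl in \<open>auto simp: \<sigma>0_def P_def Q_def\<close>)
    have "bij_betw \<sigma>0 ({1..k} \<union> P \<union> Q) (I \<union> M \<union> J)"
      by (intro bij_betw_combine b1 b2 b3) (use IJdisj in \<open>auto simp: M_def\<close>)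
    moreover have "{1..k} \<union> P \<union> Q = {1..n}" using kl l by (auto simp: P_def Q_def)
    moreover have "I \<union> M \<union> J = {1..n}" using IJsub by (auto simp: M_def)
    ultimately have "bij_betw \<sigma>0 {1..n} {1..n}" by simp
    then have "\<sigma>0 permutes {1..n}"
      by (rule bij_imp_permutes) (use kl l in \<open>auto simp: \<sigma>0_def P_def Q_def\<close>)
    moreover have "\<forall>r\<in>{1..k}. \<sigma>0 r = ii r" by (simp add: \<sigma>0_def)
    moreover have "\<forall>s\<in>{1..l}. \<sigma>0 (n + 1 - s) = jj s"
      using kl by (auto simp: \<sigma>0_def P_def Q_def)
    ultimately show ?thesis unfolding S_def by blast
  qed
  have rho_perm: "\<rho> permutes {1..n}"
  proof (rule bij_imp_permutes)
    show "bij_betw \<rho> {1..n} {1..n}"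
      by (rule bij_betw_byWitness[where f'=\<rho>]) (use kl l in \<open>auto simp: \<rho>_def P_def\<close>)
    show "\<rho> x = x" if "x \<notin> {1..n}" for x using that kl by (auto simp: \<rho>_def P_def)
  qed
  have rhoS: "\<sigma> \<circ> \<rho> \<in> S" if "\<sigma> \<in> S" for \<sigma>
    unfolding S_def
  proof (intro CollectI conjI ballI)
    show "\<sigma> \<circ> \<rho> permutes {1..n}" using permutes_compose[OF rho_perm S_perm[OF that]] .
    show "(\<sigma> \<circ> \<rho>) r = ii r" if "r \<in> {1..k}" for r
      using that S_ii[OF \<open>\<sigma> \<in> S\<close> that] by (auto simp: \<rho>_def P_def)
    show "(\<sigma> \<circ> \<rho>) (n + 1 - s) = jj s" if "s \<in> {1..l}" for s
      using that S_jj[OF \<open>\<sigma> \<in> S\<close> that] kl by (auto simp: \<rho>_def P_def)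
  qed
  have S_I: "\<sigma> ` {1..k} = I" if "\<sigma> \<in> S" for \<sigma>
    unfolding I_def using S_ii[OF that] by (rule image_cong[OF refl])
  have S_Js: "\<sigma> ` {n+1-s..n} = jj ` {1..s}" if "\<sigma> \<in> S" "s \<le> l" for \<sigma> s
  proof -
    have "\<sigma> ` {n+1-s..n} = (\<lambda>t. \<sigma> (n + 1 - t)) ` {1..s}"
      using Qimg[of s] that kl by (simp add: image_image)
    also have "\<dots> = jj ` {1..s}" using S_jj[OF that(1)] that(2) by (intro image_cong) auto
    finally show ?thesis .
  qed
  have S_J: "\<sigma> ` Q = J" if "\<sigma> \<in> S" for \<sigma>
    using S_Js[OF that, of l] by (simp add: Q_def J_def)
  have S_P: "\<sigma> ` P = M" if "\<sigma> \<in> S" for \<sigma>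
  proof -
    have inj: "inj \<sigma>" using S_perm[OF that] by (rule permutes_inj)
    have "\<sigma> ` P = \<sigma> ` {1..n} - (\<sigma> ` {1..k} \<union> \<sigma> ` Q)"
      unfolding P_eq image_set_diff[OF inj] image_Un ..
    also have "\<dots> = M" using permutes_image[OF S_perm[OF that]] S_I[OF that] S_J[OF that]
      by (simp add: M_def)
    finally show ?thesis .
  qed
  have fdec: "lop_obj n a \<sigma> = C1 + C2 + hm \<sigma>" if "\<sigma> \<in> S" for \<sigma>
  proof -
    have perm: "\<sigma> permutes {1..n}" using S_perm[OF that] .
    have inj: "inj \<sigma>" using perm by (rule permutes_inj)
    have injn: "inj_on \<sigma> A" for A using inj by (auto intro: inj_on_subset)
    have img: "\<sigma> ` {1..n} = {1..n}" using perm by (rule permutes_image)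
    define g where "g = (\<lambda>x. a (\<sigma> (fst x)) (\<sigma> (snd x)))"
    define T1 where "T1 = Sigma {1..k} (\<lambda>p. {p+1..n})"
    define T2 where "T2 = {(p, q). k < p \<and> p < q \<and> n - l < q \<and> q \<le> n}"
    define T3 where "T3 = Sigma P (\<lambda>p. {p+1..n-l})"
    have "T2 \<subseteq> {..n} \<times> {..n}" by (auto simp: T2_def)
    then have fin2: "finite T2" by (rule finite_subset) simp
    have fin: "finite T1" "finite T2" "finite T3"
      using fin2 by (auto simp: T1_def T3_def P_def)
    have "lop_obj n a \<sigma> = sum g (Sigma {1..n-1} (\<lambda>p. {p+1..n}))"
      unfolding lop_obj_def g_def by (simp add: sum.Sigma case_prod_beta)
    also have "Sigma {1..n-1} (\<lambda>p. {p+1..n}) = T1 \<union> T2 \<union> T3"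
      using kl l by (auto simp: T1_def T2_def T3_def P_def)
    also have "sum g (T1 \<union> T2 \<union> T3) = sum g T1 + sum g T2 + sum g T3"
      using fin kl
      by (subst sum.union_disjoint, simp, simp, force simp: T1_def T2_def T3_def P_def,
          subst sum.union_disjoint, auto simp: T1_def T2_def T3_def P_def)
    also have "sum g T3 = hm \<sigma>"
      unfolding hm_def T3_def g_def by (simp add: sum.Sigma P_def case_prod_beta)
    also have "sum g T1 = C1"
    proof -
      have "sum g T1 = (\<Sum>r = 1..k. \<Sum>q = r+1..n. a (ii r) (\<sigma> q))"
        unfolding T1_def g_def using S_ii[OF that]
        by (simp add: sum.Sigma case_prod_beta, intro sum.cong refl, auto)
      also have "\<dots> = C1" unfolding C1_def
      proof (rule sum.cong[OF refl])
        fix r assume r: "r \<in> {1..k}"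
        have "\<sigma> ` {r+1..n} = \<sigma> ` ({1..n} - {1..r})" by (rule arg_cong[where f="image \<sigma>"]) auto
        also have "\<dots> = {1..n} - ii ` {1..r}"
          using img S_ii[OF that] r by (simp add: image_set_diff[OF inj])
        finally have e: "\<sigma> ` {r+1..n} = {1..n} - ii ` {1..r}" .
        show "(\<Sum>q = r+1..n. a (ii r) (\<sigma> q)) = (\<Sum>j \<in> {1..n} - ii ` {1..r}. a (ii r) j)"
          unfolding e[symmetric] using sum.reindex[OF injn, of "a (ii r)" "{r+1..n}"]
          by (simp add: comp_def)
      qed
      finally show ?thesis .
    qed
    also have "sum g T2 = C2"
    proof -
      have jq: "\<sigma> q = jj (n + 1 - q)" if "n - l < q" "q \<le> n" for q
      proof -
        have m: "n + 1 - q \<in> {1..l}" using that kl by auto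
        have "n + 1 - (n + 1 - q) = q" using that by auto
        then show ?thesis using S_jj[OF \<open>\<sigma> \<in> S\<close> m] by simp
      qed
      have "sum g T2 = (\<Sum>x\<in>Sigma {1..l} (\<lambda>s. {k+1..n-s}). a (\<sigma> (snd x)) (jj (fst x)))"
        by (rule sum.reindex_bij_witness[where j="\<lambda>x. (n + 1 - snd x, fst x)"
              and i="\<lambda>x. (snd x, n + 1 - fst x)"])
           (use kl l S_jj[OF that] jq in \<open>auto simp: T2_def g_def\<close>)
      also have "\<dots> = (\<Sum>s = 1..l. \<Sum>p = k+1..n-s. a (\<sigma> p) (jj s))"
        by (simp add: sum.Sigma case_prod_beta)
      also have "\<dots> = C2" unfolding C2_def
      proof (rule sum.cong[OF refl])
        fix s assume s: "s \<in> {1..l}"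
        have "\<sigma> ` {k+1..n-s} = \<sigma> ` ({1..n} - ({1..k} \<union> {n+1-s..n}))"
          by (rule arg_cong[where f="image \<sigma>"]) (use s kl in auto)
        also have "\<dots> = {1..n} - (I \<union> jj ` {1..s})"
          using img S_I[OF that] S_Js[OF that, of s] s by (simp add: image_set_diff[OF inj] image_Un)
        finally have e: "\<sigma> ` {k+1..n-s} = {1..n} - (I \<union> jj ` {1..s})" .
        have "jj s \<in> J" using s by (simp add: J_def)
        then have js: "jj s \<in> {1..n}" "jj s \<notin> I" using IJsub IJdisj by auto
        have "{1..s} = insert s {1..<s}" using s by auto
        then have jsplit: "jj ` {1..s} = insert (jj s) (jj ` {1..<s})" by simp
        have e2: "{1..n} - (I \<union> jj ` {1..<s}) = insert (jj s) ({1..n} - (I \<union> jj ` {1..s}))"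
        proof -
          have "jj s \<notin> jj ` {1..<s}"
          proof
            assume "jj s \<in> jj ` {1..<s}"
            then obtain t where t: "t \<in> {1..<s}" "jj s = jj t" by auto
            have "t \<in> {1..l}" using t(1) s by auto
            then have "s = t" using inj_onD[OF jj_inj t(2) s] by simp
            then show False using t by auto
          qed
          then show ?thesis using js jsplit by auto
        qed
        have "(\<Sum>p = k+1..n-s. a (\<sigma> p) (jj s)) = (\<Sum>i\<in>{1..n} - (I \<union> jj ` {1..s}). a i (jj s))"
          unfolding e[symmetric] using sum.reindex[OF injn, of "\<lambda>i. a i (jj s)" "{k+1..n-s}"]
          by (simp add: comp_def)
        also have "\<dots> = (\<Sum>i \<in> {1..n} - (I \<union> jj ` {1..<s}). a i (jj s))"
          unfolding e2 using diag js jsplit by (simp add: sum.insert)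
        finally show "(\<Sum>p = k+1..n-s. a (\<sigma> p) (jj s)) = (\<Sum>i \<in> {1..n} - (I \<union> jj ` {1..<s}). a i (jj s))" .
      qed
      finally show ?thesis .
    qed
    finally show ?thesis .
  qed
  have rhorho: "\<sigma> \<circ> \<rho> \<circ> \<rho> = \<sigma>" for \<sigma> :: "nat \<Rightarrow> nat"
    by (rule ext) (auto simp: \<rho>_def P_def)
  have hsym: "hm \<sigma> + hm (\<sigma> \<circ> \<rho>) = D" if "\<sigma> \<in> S" for \<sigma>
  proof -
    define U where "U = Sigma P (\<lambda>p. {p+1..n-l})"
    define U' where "U' = {(p, q). p \<in> P \<and> q \<in> P \<and> q < p}"
    define g where "g = (\<lambda>x. a (\<sigma> (fst x)) (\<sigma> (snd x)))"
    have finU: "finite U" "finite U'" "finite (P \<times> P)"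
      by (auto simp: U_def U'_def P_def intro: finite_subset[of _ "P \<times> P"])
    have h1: "hm \<sigma> = sum g U"
      unfolding hm_def U_def g_def by (simp add: sum.Sigma P_def case_prod_beta)
    have "hm (\<sigma> \<circ> \<rho>) = (\<Sum>x\<in>U. g (\<rho> (fst x), \<rho> (snd x)))"
      unfolding hm_def U_def g_def by (simp add: sum.Sigma P_def case_prod_beta)
    also have "\<dots> = sum g U'"
      by (rule sum.reindex_bij_witness[where i="\<lambda>x. (\<rho> (fst x), \<rho> (snd x))"
            and j="\<lambda>x. (\<rho> (fst x), \<rho> (snd x))"])
         (auto simp: U_def U'_def \<rho>_def P_def)
    finally have h2: "hm (\<sigma> \<circ> \<rho>) = sum g U'" .
    have "sum g U + sum g U' = sum g (U \<union> U')"
      by (rule sum.union_disjoint[symmetric]) (fact finU(1), fact finU(2), auto simp: U_def U'_def)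
    also have "\<dots> = sum g (P \<times> P)"
    proof (rule sum.mono_neutral_left[OF finU(3)])
      show "U \<union> U' \<subseteq> P \<times> P" by (auto simp: U_def U'_def P_def)
      show "\<forall>x\<in>P \<times> P - (U \<union> U'). g x = 0"
      proof
        fix x assume x: "x \<in> P \<times> P - (U \<union> U')"
        then have "fst x = snd x" "fst x \<in> {1..n}" by (auto simp: U_def U'_def P_def)
        moreover have "\<sigma> (fst x) \<in> {1..n}"
          using permutes_in_image[OF S_perm[OF that]] \<open>fst x \<in> {1..n}\<close> by simp
        ultimately show "g x = 0" using diag by (simp add: g_def)
      qed
    qed
    also have "\<dots> = (\<Sum>p\<in>P. \<Sum>q\<in>P. a (\<sigma> p) (\<sigma> q))"
      unfolding g_def by (simp add: sum.cartesian_product case_prod_beta)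
    also have "\<dots> = D"
    proof -
      have inj: "inj_on \<sigma> P" using permutes_inj[OF S_perm[OF that]] by (auto intro: inj_on_subset)
      have "(\<Sum>p\<in>P. \<Sum>q\<in>P. a (\<sigma> p) (\<sigma> q)) = (\<Sum>p\<in>P. \<Sum>j\<in>M. a (\<sigma> p) j)"
        using sum.reindex[OF inj, of "a _"] S_P[OF that] by (simp add: comp_def)
      also have "\<dots> = D" unfolding D_def
        using sum.reindex[OF inj, of "\<lambda>i. \<Sum>j\<in>M. a i j"] S_P[OF that] by (simp add: comp_def)
      finally show ?thesis .
    qed
    finally show ?thesis using h1 h2 by simp
  qed
  have swap: "(\<Sum>\<sigma>\<in>S. hm \<sigma>) = (\<Sum>\<sigma>\<in>S. hm (\<sigma> \<circ> \<rho>))"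
    by (rule sum.reindex_bij_witness[where i="\<lambda>\<sigma>. \<sigma> \<circ> \<rho>" and j="\<lambda>\<sigma>. \<sigma> \<circ> \<rho>"])
       (auto simp: rhorho rhoS)
  have "2 * (\<Sum>\<sigma>\<in>S. hm \<sigma>) = (\<Sum>\<sigma>\<in>S. hm \<sigma> + hm (\<sigma> \<circ> \<rho>))"
    using swap by (simp add: sum.distrib)
  also have "\<dots> = real (card S) * D" using hsym by simp
  finally have H: "2 * (\<Sum>\<sigma>\<in>S. hm \<sigma>) = real (card S) * D" .
  have F: "(\<Sum>\<sigma>\<in>S. lop_obj n a \<sigma>) = real (card S) * (C1 + C2) + (\<Sum>\<sigma>\<in>S. hm \<sigma>)"
    using fdec by (simp add: sum.distrib algebra_simps)
  have cpos: "real (card S) > 0" using finS nonempty by (simp add: card_gt_0_iff)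
  have "(\<Sum>\<sigma>\<in>S. lop_obj n a \<sigma>) / real (card S) = C1 + C2 + D / 2"
    using F H cpos by (simp add: field_simps)
  then show ?thesis unfolding C1_def C2_def D_def M_def by simp
qed

end
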